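(* Let $\omega\in\Omega_0$, $N\ge2$, and let $\boldsymbol u=(\boldsymbol u(1),\dots,\boldsymbol u(N))$, $\boldsymbol u(j)=(a(j),b(j))^{\mathsf T}$, be an eigenvector of $\mathcal S_\omega|_{[1,N]}$ with eigenvalue $z$. (i) If $z\neq V_{22,\omega}(j)$ for all $j\in[1,N]$, then $a(1)a(N)\neq0$; if $z=V_{22,\omega}(1)$, then $a(N)\neq0$; if $z=V_{22,\omega}(N)$, then $a(1)\neq0$. Moreover, if $z\neq V_{22,\omega}(j)$ for all $j\in[2,N-1]$, then $z$ is a simple eigenvalue. (ii) If $z=V_{22,\omega}(m)$ for some $m\in[2,N-1]$, then the multiplicity of $z$ does not exceed $2$; if the multiplicity is $2$, then there exists an eigenvector whose component $a(N)$ is nonzero and there exists an eigenvector whose component $a(N)$ is zero.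
   Context: $(\Omega,\mathcal F,\nu,T)$ is ergodic and $f=(f_{ij}):\Omega\to M(2,\mathbb C)$ bounded measurable with self-adjoint values; $V_\omega(n)=f(T^n\omega)$ with entries $V_{ij,\omega}(n)$, and $J=\begin{pmatrix}1&0\\0&0\end{pmatrix}$. $\Omega_0$ is the set of $\omega\in\Omega$ such that $V_{12,\omega}(i)\neq0$ for all $i\in\mathbb Z$ and $V_{22,\omega}(i)\neq V_{22,\omega}(j)$ for all $i\neq j$. $\mathcal S_\omega|_{[1,N]}$ is the $2N\times2N$ block tridiagonal Hermitian matrix with diagonal blocks $V_\omega(1),\dots,V_\omega(N)$ and all off-diagonal blocks equal to $J$ (the restriction of $(\mathcal S_\omega\boldsymbol u)(n)=J\boldsymbol u(n+1)+J\boldsymbol u(n-1)+V_\omega(n)\boldsymbol u(n)$ to $[1,N]$ with Dirichlet boundary conditions). *)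

theory Defs
  imports "HOL-Probability.Probability" "Jordan_Normal_Form.Jordan_Normal_Form"
          "Jordan_Normal_Form.Schur_Decomposition" "Jordan_Normal_Form.Matrix_Kernel"
begin

definition ergodic_invertible :: "'a measure \<Rightarrow> ('a \<Rightarrow> 'a) \<Rightarrow> bool" where
  "ergodic_invertible \<nu> T \<longleftrightarrow>
     prob_space \<nu> \<and> space \<nu> = UNIV \<and> bij T \<and>
     T \<in> measurable \<nu> \<nu> \<and> inv_into UNIV T \<in> measurable \<nu> \<nu> \<and> distr \<nu> \<nu> T = \<nu> \<and>
     (\<forall>A \<in> sets \<nu>. T -` A = A \<longrightarrow> measure \<nu> A = 0 \<or> measure \<nu> A = 1)"

definition Tpow :: "('a \<Rightarrow> 'a) \<Rightarrow> int \<Rightarrow> 'a \<Rightarrow> 'a" where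
  "Tpow T n = (if n \<ge> 0 then T ^^ nat n else inv_into UNIV T ^^ nat (- n))"

definition Vpot :: "('a \<Rightarrow> complex mat) \<Rightarrow> ('a \<Rightarrow> 'a) \<Rightarrow> 'a \<Rightarrow> int \<Rightarrow> complex mat" where
  "Vpot f T \<omega> n = f (Tpow T n \<omega>)"

(* entries V_{12} and V_{22} (1-based in the paper, 0-based indices here) *)
definition V12 :: "('a \<Rightarrow> complex mat) \<Rightarrow> ('a \<Rightarrow> 'a) \<Rightarrow> 'a \<Rightarrow> int \<Rightarrow> complex" where
  "V12 f T \<omega> n = Vpot f T \<omega> n $$ (0, 1)"

definition V22 :: "('a \<Rightarrow> complex mat) \<Rightarrow> ('a \<Rightarrow> 'a) \<Rightarrow> 'a \<Rightarrow> int \<Rightarrow> complex" where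
  "V22 f T \<omega> n = Vpot f T \<omega> n $$ (1, 1)"

definition Omega0 :: "('a \<Rightarrow> complex mat) \<Rightarrow> ('a \<Rightarrow> 'a) \<Rightarrow> 'a set" where
  "Omega0 f T = {\<omega>. (\<forall>i. V12 f T \<omega> i \<noteq> 0) \<and>
                     (\<forall>i j. i \<noteq> j \<longrightarrow> V22 f T \<omega> i \<noteq> V22 f T \<omega> j)}"

(* The 2N x 2N block tridiagonal matrix S_omega restricted to [1,N] (Dirichlet b.c.):
   diagonal blocks V_omega(1..N), off-diagonal blocks J = [[1,0],[0,0]].
   Row/column index p (0-based) corresponds to site p div 2 + 1 and component p mod 2. *)
definition Smat :: "('a \<Rightarrow> complex mat) \<Rightarrow> ('a \<Rightarrow> 'a) \<Rightarrow> 'a \<Rightarrow> nat \<Rightarrow> complex mat" where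
  "Smat f T \<omega> N = mat (2 * N) (2 * N) (\<lambda>(p, q).
      let n = p div 2 + 1; r = p mod 2; m = q div 2 + 1; s = q mod 2 in
      if n = m then Vpot f T \<omega> (int n) $$ (r, s)
      else if (n = m + 1 \<or> m = n + 1) \<and> r = 0 \<and> s = 0 then 1 else 0)"

definition acomp :: "complex vec \<Rightarrow> nat \<Rightarrow> complex" where
  "acomp v j = v $ (2 * (j - 1))"

definition eig_mult :: "complex mat \<Rightarrow> complex \<Rightarrow> nat" where
  "eig_mult A z = kernel_dim (char_matrix A z)"

end

theory Submission imports Defs begin


lemma neg_helper: "(x::'a::field) + c * y = 0 \<Longrightarrow> x = - (c * y)"
  by (simp add: eq_neg_iff_add_eq_0)

context kernel begin
lemma span_facts:
  assumes "S \<subseteq> mat_kernel A"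
  shows "\<And>x y. x \<in> span S \<Longrightarrow> y \<in> span S \<Longrightarrow> x + y \<in> span S"
    "\<And>c x. x \<in> span S \<Longrightarrow> c \<cdot>\<^sub>v x \<in> span S" "S \<subseteq> span S" "span S \<subseteq> mat_kernel A"
    "0\<^sub>v nc \<in> span S"
proof -
  have sm: "LinearCombinations.submodule class_ring (span S) VK" using Ker.span_is_submodule[OF assms] by simp
  show "\<And>x y. x \<in> span S \<Longrightarrow> y \<in> span S \<Longrightarrow> x + y \<in> span S"
    using LinearCombinations.submodule.m_closed[OF sm] by simp
  show "\<And>c x. x \<in> span S \<Longrightarrow> c \<cdot>\<^sub>v x \<in> span S"
    using LinearCombinations.submodule.smult_closed[OF sm] by (simp add: class_ring_simps)
  show "S \<subseteq> span S" using Ker.in_own_span[OF assms] .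
  show "span S \<subseteq> mat_kernel A" using Ker.span_is_subset2[OF assms] by simp
  show "0\<^sub>v nc \<in> span S" using LinearCombinations.submodule.zero_closed[OF sm] by simp
qed

lemma dim_le_card:
  assumes "finite S" "S \<subseteq> mat_kernel A" "\<And>w. w \<in> mat_kernel A \<Longrightarrow> w \<in> span S"
  shows "dim \<le> card S"
proof -
  have "span S = mat_kernel A" using span_facts(4)[OF assms(2)] assms(3) by blast
  thus ?thesis using Ker.gen_ge_dim[OF assms(1)] assms(2) by simp
qed

lemma dim_pos:
  assumes "v \<in> mat_kernel A" "v \<noteq> 0\<^sub>v nc"
  shows "dim \<ge> 1"
proof (rule ccontr)
  assume "\<not> dim \<ge> 1"
  hence d0: "dim = 0" by simp
  obtain B where B: "finite B" "basis B" using kernel_basis_exists[OF A] by blast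
  have "card B = 0" using Ker.dim_basis[OF B] d0 by simp
  hence "B = {}" using B(1) by simp
  hence "span {} = mat_kernel A" using B(2) unfolding Ker.basis_def by simp
  moreover have "span {} = {0\<^sub>v nc}" unfolding Ker.span_def Ker.lincomb_def by auto
  ultimately show False using assms by auto
qed

lemma ker_lin:
  assumes "u \<in> mat_kernel A" "q \<in> mat_kernel A"
  shows "u + c \<cdot>\<^sub>v q \<in> mat_kernel A"
proof -
  have u: "u \<in> carrier_vec nc" "A *\<^sub>v u = 0\<^sub>v nr" and q: "q \<in> carrier_vec nc" "A *\<^sub>v q = 0\<^sub>v nr"
    using assms mat_kernelD[OF A] by auto
  have "A *\<^sub>v (u + c \<cdot>\<^sub>v q) = A *\<^sub>v u + A *\<^sub>v (c \<cdot>\<^sub>v q)"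
    using mult_add_distrib_mat_vec[OF A u(1)] q(1) by simp
  also have "A *\<^sub>v (c \<cdot>\<^sub>v q) = c \<cdot>\<^sub>v (A *\<^sub>v q)" using mult_mat_vec[OF A q(1)] .
  also have "c \<cdot>\<^sub>v (A *\<^sub>v q) = 0\<^sub>v nr" using q by (intro eq_vecI) auto
  finally have "A *\<^sub>v (u + c \<cdot>\<^sub>v q) = 0\<^sub>v nr" using u q by simp
  thus ?thesis using u q by (intro mat_kernelI[OF A]) auto
qed

lemma vec_eq_lemma:
  fixes u q :: "'a vec"
  assumes "u \<in> carrier_vec nc" "q \<in> carrier_vec nc" "u + c \<cdot>\<^sub>v q = 0\<^sub>v nc"
  shows "u = (-c) \<cdot>\<^sub>v q"
proof (rule eq_vecI)
  fix k assume k: "k < dim_vec ((-c) \<cdot>\<^sub>v q)"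
  have "(u + c \<cdot>\<^sub>v q) $ k = 0" using assms k by simp
  hence "u $ k + c * q $ k = 0" using assms(1,2) k by simp
  hence "u $ k = - (c * q $ k)" by (rule neg_helper)
  thus "u $ k = ((-c) \<cdot>\<^sub>v q) $ k" using assms k by (simp add: algebra_simps)
qed (use assms in auto)

lemma dim_le2:
  assumes i: "i < nc" and j: "j < nc"
    and uniq: "\<And>w. w \<in> mat_kernel A \<Longrightarrow> w $ i = 0 \<Longrightarrow> w $ j = 0 \<Longrightarrow> w = 0\<^sub>v nc"
  shows "dim \<le> 2 \<and> (i = j \<longrightarrow> dim \<le> 1) \<and>
     (dim = 2 \<longrightarrow> (\<exists>w\<in>mat_kernel A. w $ j \<noteq> 0) \<and> (\<exists>w\<in>mat_kernel A. w \<noteq> 0\<^sub>v nc \<and> w $ j = 0))"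
proof -
  have carr: "\<And>w. w \<in> mat_kernel A \<Longrightarrow> w \<in> carrier_vec nc" using mat_kernelD[OF A] by auto
  have K0: "u = (u $ i / q $ i) \<cdot>\<^sub>v q"
    if u: "u \<in> mat_kernel A" "u $ j = 0" and q: "q \<in> mat_kernel A" "q \<noteq> 0\<^sub>v nc" "q $ j = 0" for u q
  proof -
    have qi: "q $ i \<noteq> 0" using uniq q by blast
    let ?c = "- (u $ i / q $ i)"
    have m: "u + ?c \<cdot>\<^sub>v q \<in> mat_kernel A" by (rule ker_lin[OF u(1) q(1)])
    have "(u + ?c \<cdot>\<^sub>v q) $ i = u $ i + ?c * q $ i" "(u + ?c \<cdot>\<^sub>v q) $ j = u $ j + ?c * q $ j"
      using carr[OF u(1)] carr[OF q(1)] i j by auto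
    hence "(u + ?c \<cdot>\<^sub>v q) $ i = 0" "(u + ?c \<cdot>\<^sub>v q) $ j = 0" using u(2) q(3) qi by auto
    hence "u + ?c \<cdot>\<^sub>v q = 0\<^sub>v nc" using uniq[OF m] by blast
    from vec_eq_lemma[OF carr[OF u(1)] carr[OF q(1)] this] show ?thesis by simp
  qed
  have dec: "\<exists>u. u \<in> mat_kernel A \<and> u $ j = 0 \<and> w = u + (w $ j / p $ j) \<cdot>\<^sub>v p"
    if w: "w \<in> mat_kernel A" and p: "p \<in> mat_kernel A" "p $ j \<noteq> 0" for w p
  proof -
    let ?c = "w $ j / p $ j"
    let ?u = "w + (- ?c) \<cdot>\<^sub>v p"
    have "?u \<in> mat_kernel A" by (rule ker_lin[OF w p(1)])
    moreover have "?u $ j = w $ j + (- ?c) * p $ j" using carr[OF w] carr[OF p(1)] j by auto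
    hence "?u $ j = 0" using p(2) by auto
    moreover have "w = ?u + ?c \<cdot>\<^sub>v p"
    proof (rule eq_vecI)
      fix k assume "k < dim_vec (?u + ?c \<cdot>\<^sub>v p)"
      hence k: "k < nc" using carr[OF p(1)] by simp
      have "(?u + ?c \<cdot>\<^sub>v p) $ k = (w $ k + (- ?c) * p $ k) + ?c * p $ k"
        using carr[OF w] carr[OF p(1)] k by simp
      thus "w $ k = (?u + ?c \<cdot>\<^sub>v p) $ k" by simp
    qed (use carr[OF w] carr[OF p(1)] in simp)
    ultimately show ?thesis by blast
  qed
  show ?thesis
  proof (cases "\<exists>p\<in>mat_kernel A. p $ j \<noteq> 0")
    case True
    then obtain p where p: "p \<in> mat_kernel A" "p $ j \<noteq> 0" by blast
    show ?thesis
    proof (cases "\<exists>q\<in>mat_kernel A. q \<noteq> 0\<^sub>v nc \<and> q $ j = 0")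
      case True
      then obtain q where q: "q \<in> mat_kernel A" "q \<noteq> 0\<^sub>v nc" "q $ j = 0" by blast
      have "dim \<le> card {p, q}"
      proof (rule dim_le_card)
        fix w assume w: "w \<in> mat_kernel A"
        obtain u where u: "u \<in> mat_kernel A" "u $ j = 0" "w = u + (w $ j / p $ j) \<cdot>\<^sub>v p"
          using dec[OF w p] by blast
        have "u = (u $ i / q $ i) \<cdot>\<^sub>v q" using K0[OF u(1,2) q] .
        hence eq: "w = (u $ i / q $ i) \<cdot>\<^sub>v q + (w $ j / p $ j) \<cdot>\<^sub>v p" using u(3) by simp
        have sub: "{p,q} \<subseteq> mat_kernel A" using p q by auto
        have "(u $ i / q $ i) \<cdot>\<^sub>v q \<in> span {p,q}" "(w $ j / p $ j) \<cdot>\<^sub>v p \<in> span {p,q}"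
          using span_facts(2,3)[OF sub] by auto
        hence "(u $ i / q $ i) \<cdot>\<^sub>v q + (w $ j / p $ j) \<cdot>\<^sub>v p \<in> span {p,q}"
          using span_facts(1)[OF sub] by blast
        thus "w \<in> span {p, q}" unfolding eq[symmetric] .
      qed (use p q in auto)
      also have "\<dots> \<le> 2" by (simp add: card_insert_le_m1)
      finally have "dim \<le> 2" .
      moreover have "i \<noteq> j" using uniq[OF q(1)] q by blast
      ultimately show ?thesis using p q by blast
    next
      case False
      have "dim \<le> card {p}"
      proof (rule dim_le_card)
        fix w assume w: "w \<in> mat_kernel A"
        obtain u where u: "u \<in> mat_kernel A" "u $ j = 0" "w = u + (w $ j / p $ j) \<cdot>\<^sub>v p"
          using dec[OF w p] by blast
        have "u = 0\<^sub>v nc" using False u by blast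
        hence eq: "w = (w $ j / p $ j) \<cdot>\<^sub>v p" using u(3) carr[OF p(1)] by simp
        have "(w $ j / p $ j) \<cdot>\<^sub>v p \<in> span {p}" using span_facts(2,3)[of "{p}"] p by auto
        thus "w \<in> span {p}" unfolding eq[symmetric] .
      qed (use p in auto)
      thus ?thesis by simp
    qed
  next
    case False
    have "dim \<le> 1"
    proof (cases "\<exists>q\<in>mat_kernel A. q \<noteq> 0\<^sub>v nc")
      case True
      then obtain q where q: "q \<in> mat_kernel A" "q \<noteq> 0\<^sub>v nc" by blast
      have "dim \<le> card {q}"
      proof (rule dim_le_card)
        fix w assume w: "w \<in> mat_kernel A"
        have eq: "w = (w $ i / q $ i) \<cdot>\<^sub>v q" using K0[OF w _ q] False w q by blast
        have "(w $ i / q $ i) \<cdot>\<^sub>v q \<in> span {q}" using span_facts(2,3)[of "{q}"] q by auto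
        thus "w \<in> span {q}" unfolding eq[symmetric] .
      qed (use q in auto)
      thus ?thesis by simp
    next
      case F2: False
      have "dim \<le> card ({} :: 'a vec set)"
      proof (rule dim_le_card)
        fix w assume w: "w \<in> mat_kernel A"
        thus "w \<in> span {}" using F2 span_facts(5)[of "{}"] by auto
      qed auto
      thus ?thesis by simp
    qed
    thus ?thesis by simp
  qed
qed
end


lemma Smat_carrier: "Smat f T \<omega> N \<in> carrier_mat (2*N) (2*N)"
  by (simp add: Smat_def)

lemma Smat_entry: assumes "p < 2*N" "q < 2*N"
  shows "Smat f T \<omega> N $$ (p, q) = (if p div 2 = q div 2 then Vpot f T \<omega> (int (p div 2 + 1)) $$ (p mod 2, q mod 2)
      else if (p div 2 = q div 2 + 1 \<or> q div 2 = p div 2 + 1) \<and> p mod 2 = 0 \<and> q mod 2 = 0 then 1 else 0)"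
  using assms by (simp add: Smat_def Let_def)

lemma mult_row:
  assumes w: "w \<in> carrier_vec (2*N)" and p: "p < 2*N"
  shows "(Smat f T \<omega> N *\<^sub>v w) $ p = (\<Sum>q\<in>{0..<2*N}. Smat f T \<omega> N $$ (p, q) * w $ q)"
  using assms Smat_carrier[of f T \<omega> N] by (simp add: mult_mat_vec_def scalar_prod_def)

lemma row_even:
  assumes w: "w \<in> carrier_vec (2*N)" and k: "k < N"
  shows "(Smat f T \<omega> N *\<^sub>v w) $ (2*k) = Vpot f T \<omega> (int (Suc k)) $$ (0,0) * w $ (2*k)
     + Vpot f T \<omega> (int (Suc k)) $$ (0,1) * w $ (2*k+1)
     + (if k \<ge> 1 then w $ (2*k-2) else 0) + (if k + 1 < N then w $ (2*k+2) else 0)"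
proof -
  let ?V = "Vpot f T \<omega> (int (Suc k))"
  have pt: "Smat f T \<omega> N $$ (2*k, q) * w $ q =
     (if q = 2*k then ?V $$ (0,0) * w $ (2*k) else 0) + (if q = 2*k+1 then ?V $$ (0,1) * w $ (2*k+1) else 0)
     + (if q = 2*k-2 then (if k \<ge> 1 then w $ q else 0) else 0) + (if q = 2*k+2 then w $ q else 0)"
    if q: "q < 2*N" for q
  proof -
    obtain d r where qd: "q = 2*d + r" "r < 2" by (metis mod_less_divisor mult_div_mod_eq zero_less_numeral)
    have "q div 2 = d" "q mod 2 = r" using qd by auto
    moreover have "r = 0 \<or> r = 1" using qd by auto
    moreover have "(2*k) div 2 = k" "(2*k) mod 2 = 0" by simp_all
    ultimately have e: "Smat f T \<omega> N $$ (2*k, q) = (if k = d then ?V $$ (0, r)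
       else if (k = d + 1 \<or> d = k + 1) \<and> r = 0 then 1 else 0)"
      using Smat_entry[of "2*k" N q f T \<omega>] k q by simp
    show ?thesis
    proof (cases "r = 0")
      case True
      thus ?thesis using e qd by auto
    next
      case False
      hence r1: "r = 1" using qd by simp
      hence "q \<noteq> 2*k" "q \<noteq> 2*k-2" "q \<noteq> 2*k+2" using qd by presburger+
      thus ?thesis using e qd r1 by auto
    qed
  qed
  have "(Smat f T \<omega> N *\<^sub>v w) $ (2*k) = (\<Sum>q\<in>{0..<2*N}. Smat f T \<omega> N $$ (2*k, q) * w $ q)"
    using k by (intro mult_row[OF w]) simp
  also have "\<dots> = (\<Sum>q\<in>{0..<2*N}.
     (if q = 2*k then ?V $$ (0,0) * w $ (2*k) else 0) + (if q = 2*k+1 then ?V $$ (0,1) * w $ (2*k+1) else 0)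
     + (if q = 2*k-2 then (if k \<ge> 1 then w $ q else 0) else 0) + (if q = 2*k+2 then w $ q else 0))"
    by (rule sum.cong) (simp_all only: pt atLeastLessThan_iff)
  also have "\<dots> = ?V $$ (0,0) * w $ (2*k) + ?V $$ (0,1) * w $ (2*k+1)
     + (if k \<ge> 1 then w $ (2*k-2) else 0) + (if k + 1 < N then w $ (2*k+2) else 0)"
    using k by (simp add: sum.distrib sum.delta; linarith)
  finally show ?thesis .
qed

lemma row_odd:
  assumes w: "w \<in> carrier_vec (2*N)" and k: "k < N"
  shows "(Smat f T \<omega> N *\<^sub>v w) $ (2*k+1) = Vpot f T \<omega> (int (Suc k)) $$ (1,0) * w $ (2*k)
     + Vpot f T \<omega> (int (Suc k)) $$ (1,1) * w $ (2*k+1)"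
proof -
  let ?V = "Vpot f T \<omega> (int (Suc k))"
  have pt: "Smat f T \<omega> N $$ (2*k+1, q) * w $ q =
     (if q = 2*k then ?V $$ (1,0) * w $ (2*k) else 0) + (if q = 2*k+1 then ?V $$ (1,1) * w $ (2*k+1) else 0)"
    if q: "q < 2*N" for q
  proof -
    obtain d r where qd: "q = 2*d + r" "r < 2" by (metis mod_less_divisor mult_div_mod_eq zero_less_numeral)
    have "q div 2 = d" "q mod 2 = r" using qd by auto
    moreover have "r = 0 \<or> r = 1" using qd by auto
    moreover have "(2*k+1) div 2 = k" "(2*k+1) mod 2 = 1" by simp_all
    ultimately have e: "Smat f T \<omega> N $$ (2*k+1, q) = (if k = d then ?V $$ (1, r) else 0)"
      using Smat_entry[of "2*k+1" N q f T \<omega>] k q by simp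
    show ?thesis
    proof (cases "r = 0")
      case True
      thus ?thesis using e qd by auto
    next
      case False
      hence r1: "r = 1" using qd by simp
      hence "q \<noteq> 2*k" using qd by presburger
      thus ?thesis using e qd r1 by auto
    qed
  qed
  have "(Smat f T \<omega> N *\<^sub>v w) $ (2*k+1) = (\<Sum>q\<in>{0..<2*N}. Smat f T \<omega> N $$ (2*k+1, q) * w $ q)"
    using k by (intro mult_row[OF w]) simp
  also have "\<dots> = (\<Sum>q\<in>{0..<2*N}.
     (if q = 2*k then ?V $$ (1,0) * w $ (2*k) else 0) + (if q = 2*k+1 then ?V $$ (1,1) * w $ (2*k+1) else 0))"
    by (rule sum.cong) (simp_all only: pt atLeastLessThan_iff)
  also have "\<dots> = ?V $$ (1,0) * w $ (2*k) + ?V $$ (1,1) * w $ (2*k+1)"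
    using k by (simp add: sum.distrib sum.delta)
  finally show ?thesis .
qed


locale recur =
  fixes a b \<alpha> \<beta> \<delta> \<gamma> :: "nat \<Rightarrow> complex" and N :: nat and z :: complex
  assumes a0: "a 0 = 0" and aN: "a (Suc N) = 0"
    and E1: "\<And>j. 1 \<le> j \<Longrightarrow> j \<le> N \<Longrightarrow> a (j-1) + a (j+1) + \<alpha> j * a j + \<beta> j * b j = z * a j"
    and E2: "\<And>j. 1 \<le> j \<Longrightarrow> j \<le> N \<Longrightarrow> \<delta> j * a j + \<gamma> j * b j = z * b j"
    and \<beta>nz: "\<And>j. 1 \<le> j \<Longrightarrow> j \<le> N \<Longrightarrow> \<beta> j \<noteq> 0"
    and \<delta>nz: "\<And>j. 1 \<le> j \<Longrightarrow> j \<le> N \<Longrightarrow> \<delta> j \<noteq> 0"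
begin

lemma b_zero: assumes "1 \<le> j" "j \<le> N" "z \<noteq> \<gamma> j" "a j = 0" shows "b j = 0"
proof -
  have "(\<gamma> j - z) * b j = 0" using E2[OF assms(1,2)] assms(4) by (simp add: algebra_simps)
  thus ?thesis using assms(3) by simp
qed

lemma a_sum: assumes "1 \<le> j" "j \<le> N" "z \<noteq> \<gamma> j" "a j = 0" shows "a (j-1) + a (j+1) = 0"
  using E1[OF assms(1,2)] b_zero[OF assms] assms(4) by simp

lemma step_fwd: assumes "1 \<le> j" "j \<le> N" "z \<noteq> \<gamma> j" "a (j-1) = 0" "a j = 0" shows "a (j+1) = 0"
  using a_sum[OF assms(1-3,5)] assms(4) by simp

lemma step_bwd: assumes "1 \<le> j" "j \<le> N" "z \<noteq> \<gamma> j" "a (j+1) = 0" "a j = 0" shows "a (j-1) = 0"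
  using a_sum[OF assms(1-3,5)] assms(4) by simp

lemma res_fwd:
  assumes k: "1 \<le> k" "k \<le> l + 1" "l \<le> N" and ne: "\<And>j. k \<le> j \<Longrightarrow> j \<le> l \<Longrightarrow> z \<noteq> \<gamma> j"
    and st: "a (k-1) = 0" "a k = 0"
  shows "\<And>i. k - 1 \<le> i \<Longrightarrow> i \<le> l + 1 \<Longrightarrow> a i = 0"
proof -
  have P: "a i = 0 \<and> a (Suc i) = 0" if i: "k - 1 \<le> i" "i \<le> l" for i
    using i
  proof (induction i rule: dec_induct)
    case base
    then show ?case using st k by simp
  next
    case (step n)
    have "a (Suc n + 1) = 0"
      by (rule step_fwd) (use step k ne in auto)
    then show ?case using step by simp
  qed
  fix i assume i: "k - 1 \<le> i" "i \<le> l + 1"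
  show "a i = 0"
  proof (cases "i \<le> l")
    case True thus ?thesis using P i by blast
  next
    case False
    hence "i = Suc l" using i by simp
    thus ?thesis using P[of l] k by simp
  qed
qed

lemma res_bwd:
  assumes k: "1 \<le> k" "k \<le> l + 1" "l \<le> N" and ne: "\<And>j. k \<le> j \<Longrightarrow> j \<le> l \<Longrightarrow> z \<noteq> \<gamma> j"
    and st: "a l = 0" "a (l+1) = 0"
  shows "\<And>i. k - 1 \<le> i \<Longrightarrow> i \<le> l + 1 \<Longrightarrow> a i = 0"
proof -
  have P: "a i = 0 \<and> a (Suc i) = 0" if i: "k - 1 \<le> i" "i \<le> l" for i
    using i(2)
  proof (induction i rule: inc_induct)
    case base
    then show ?case using st by simp
  next
    case (step n)
    have "a (Suc n - 1) = 0"
      by (rule step_bwd) (use step k ne i(1) in auto)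
    then show ?case using step by simp
  qed
  fix i assume i: "k - 1 \<le> i" "i \<le> l + 1"
  show "a i = 0"
  proof (cases "i \<le> l")
    case True thus ?thesis using P i by blast
  next
    case False
    hence "i = Suc l" using i by simp
    thus ?thesis using P[of l] k by simp
  qed
qed

lemma all_zero:
  assumes "\<And>i. 1 \<le> i \<Longrightarrow> i \<le> N \<Longrightarrow> a i = 0"
  shows "\<And>j. 1 \<le> j \<Longrightarrow> j \<le> N \<Longrightarrow> a j = 0 \<and> b j = 0"
proof -
  fix j assume j: "1 \<le> j" "j \<le> N"
  have "a (j-1) = 0"
  proof (cases "j = 1")
    case True thus ?thesis using a0 by simp
  next
    case False thus ?thesis using assms j by simp
  qed
  moreover have "a (j+1) = 0"
  proof (cases "j = N")
    case True thus ?thesis using aN by simp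
  next
    case False thus ?thesis using assms j by simp
  qed
  ultimately have "\<beta> j * b j = 0" using E1[OF j] assms[OF j] by simp
  thus "a j = 0 \<and> b j = 0" using \<beta>nz[OF j] assms[OF j] by simp
qed

lemma uniq_F:
  assumes N: "N \<ge> 1" and ne: "\<And>j. 1 \<le> j \<Longrightarrow> j \<le> N - 1 \<Longrightarrow> z \<noteq> \<gamma> j" and a1: "a 1 = 0"
  shows "\<And>j. 1 \<le> j \<Longrightarrow> j \<le> N \<Longrightarrow> a j = 0 \<and> b j = 0"
proof (rule all_zero)
  fix i assume i: "1 \<le> i" "i \<le> N"
  show "a i = 0" using res_fwd[of 1 "N-1", OF _ _ _ ne] a0 a1 N i by simp
qed

lemma uniq_B:
  assumes N: "N \<ge> 1" and ne: "\<And>j. 2 \<le> j \<Longrightarrow> j \<le> N \<Longrightarrow> z \<noteq> \<gamma> j" and aNN: "a N = 0"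
  shows "\<And>j. 1 \<le> j \<Longrightarrow> j \<le> N \<Longrightarrow> a j = 0 \<and> b j = 0"
proof (rule all_zero)
  fix i assume i: "1 \<le> i" "i \<le> N"
  show "a i = 0" using res_bwd[of 2 N, OF _ _ _ ne] aN aNN N i by simp
qed

lemma uniq_M:
  assumes m: "2 \<le> m" "m \<le> N - 1" and ne: "\<And>j. j \<noteq> m \<Longrightarrow> z \<noteq> \<gamma> j" and a1: "a 1 = 0" and aNN: "a N = 0"
  shows "\<And>j. 1 \<le> j \<Longrightarrow> j \<le> N \<Longrightarrow> a j = 0 \<and> b j = 0"
proof (rule all_zero)
  fix i assume i: "1 \<le> i" "i \<le> N"
  have f: "a i = 0" if "i \<le> m" for i
    using res_fwd[of 1 "m-1", OF _ _ _ ne] a0 a1 m that by simp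
  have b: "a i = 0" if "m \<le> i" "i \<le> N" for i
    using res_bwd[of "m+1" N, OF _ _ _ ne] aN aNN m that by simp
  show "a i = 0" using f b i by (cases "i \<le> m") auto
qed

end


definition acf :: "nat \<Rightarrow> complex vec \<Rightarrow> nat \<Rightarrow> complex" where
  "acf N w j = (if 1 \<le> j \<and> j \<le> N then w $ (2*(j-1)) else 0)"

definition bcf :: "complex vec \<Rightarrow> nat \<Rightarrow> complex" where
  "bcf w j = w $ (2*(j-1)+1)"

lemma adj_entry: assumes "A \<in> carrier_mat 2 2" "mat_adjoint A = A"
  shows "A $$ (1,0) = cnj (A $$ (0,1))"
proof -
  have "mat_adjoint A $$ (1,0) = cnj (A $$ (0,1))"
    using assms(1) unfolding mat_adjoint_def by (simp add: mat_of_rows_def)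
  thus ?thesis using assms(2) by simp
qed

lemma eig_recur:
  fixes f :: "'a \<Rightarrow> complex mat"
  assumes f_mat: "\<And>x. f x \<in> carrier_mat 2 2"
    and f_sa: "\<And>x. mat_adjoint (f x) = f x"
    and om: "\<omega> \<in> Omega0 f T"
    and w: "w \<in> carrier_vec (2*N)" and eq: "Smat f T \<omega> N *\<^sub>v w = z \<cdot>\<^sub>v w"
  shows "recur (acf N w) (bcf w) (\<lambda>j. Vpot f T \<omega> (int j) $$ (0,0)) (\<lambda>j. Vpot f T \<omega> (int j) $$ (0,1))
     (\<lambda>j. Vpot f T \<omega> (int j) $$ (1,0)) (\<lambda>j. Vpot f T \<omega> (int j) $$ (1,1)) N z"
proof
  show "acf N w 0 = 0" "acf N w (Suc N) = 0" by (simp_all add: acf_def)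
  have nz: "Vpot f T \<omega> (int j) $$ (0,1) \<noteq> 0" for j
    using om unfolding Omega0_def V12_def by auto
  show "Vpot f T \<omega> (int j) $$ (0,1) \<noteq> 0" for j by (rule nz)
  show "Vpot f T \<omega> (int j) $$ (1,0) \<noteq> 0" for j
    using adj_entry[OF f_mat f_sa] nz[of j] unfolding Vpot_def by simp
  fix j assume j: "1 \<le> j" "j \<le> N"
  then obtain k where k: "j = Suc k" "k < N" by (cases j) auto
  have r0: "(Smat f T \<omega> N *\<^sub>v w) $ (2*k) = z * w $ (2*k)" using eq w k by simp
  have r1: "(Smat f T \<omega> N *\<^sub>v w) $ (2*k+1) = z * w $ (2*k+1)" using eq w k by simp
  have e2: "2*(k-1) = 2*k-2" by simp
  have a1: "acf N w k = (if k \<ge> 1 then w $ (2*k-2) else 0)" using k e2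
    by (auto simp: acf_def)
  have a2: "acf N w (Suc (Suc k)) = (if k + 1 < N then w $ (2*k+2) else 0)" using k
    by (auto simp: acf_def)
  have a3: "acf N w (Suc k) = w $ (2*k)" "bcf w (Suc k) = w $ (2*k+1)" using k by (auto simp: acf_def bcf_def)
  have j1: "j - 1 = k" "j + 1 = Suc (Suc k)" using k by auto
  show "acf N w (j - 1) + acf N w (j + 1) + Vpot f T \<omega> (int j) $$ (0, 0) * acf N w j +
          Vpot f T \<omega> (int j) $$ (0, 1) * bcf w j = z * acf N w j"
    unfolding j1 unfolding k a1 a2 a3 using row_even[OF w k(2), of f T \<omega>] r0 by (simp add: algebra_simps)
  show "Vpot f T \<omega> (int j) $$ (1, 0) * acf N w j + Vpot f T \<omega> (int j) $$ (1, 1) * bcf w j = z * bcf w j"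
    unfolding k a3 using row_odd[OF w k(2), of f T \<omega>] r1 by simp
qed



lemma kernel_iff:
  fixes S :: "complex mat"
  assumes S: "S \<in> carrier_mat n n"
  shows "w \<in> mat_kernel (char_matrix S z) \<longleftrightarrow> w \<in> carrier_vec n \<and> S *\<^sub>v w = z \<cdot>\<^sub>v w"
proof (cases "w = 0\<^sub>v n")
  case True
  have C: "char_matrix S z \<in> carrier_mat n n" using S by simp
  have "char_matrix S z *\<^sub>v 0\<^sub>v n = 0\<^sub>v n" using C by (intro eq_vecI) auto
  hence "0\<^sub>v n \<in> mat_kernel (char_matrix S z)" using C by (intro mat_kernelI[OF C]) auto
  moreover have "S *\<^sub>v 0\<^sub>v n = z \<cdot>\<^sub>v 0\<^sub>v n" using S by (intro eq_vecI) auto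
  ultimately show ?thesis using True by auto
next
  case False
  have C: "char_matrix S z \<in> carrier_mat n n" using S by simp
  have "w \<in> mat_kernel (char_matrix S z) \<longleftrightarrow> w \<in> carrier_vec n \<and> char_matrix S z *\<^sub>v w = 0\<^sub>v n"
    using C unfolding mat_kernel_def by auto
  also have "\<dots> \<longleftrightarrow> eigenvector S w z" using eigenvector_char_matrix[OF S] False by auto
  also have "\<dots> \<longleftrightarrow> w \<in> carrier_vec n \<and> S *\<^sub>v w = z \<cdot>\<^sub>v w" using S False unfolding eigenvector_def by auto
  finally show ?thesis .
qed

theorem lemma5p7:
  fixes \<nu> :: "'a measure" and T :: "'a \<Rightarrow> 'a" and f :: "'a \<Rightarrow> complex mat"
    and \<omega> :: 'a and N :: nat and v :: "complex vec" and z :: complex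
  assumes erg: "ergodic_invertible \<nu> T"
    and f_mat: "\<And>x. f x \<in> carrier_mat 2 2"
    and f_sa: "\<And>x. mat_adjoint (f x) = f x"
    and f_meas: "\<And>i j. i < 2 \<Longrightarrow> j < 2 \<Longrightarrow> (\<lambda>x. f x $$ (i, j)) \<in> borel_measurable \<nu>"
    and f_bdd: "\<exists>C. \<forall>x i j. i < 2 \<longrightarrow> j < 2 \<longrightarrow> cmod (f x $$ (i, j)) \<le> C"
    and om: "\<omega> \<in> Omega0 f T"
    and N: "N \<ge> 2"
    and ev: "eigenvector (Smat f T \<omega> N) v z"
  shows "((\<forall>j \<in> {1..N}. z \<noteq> V22 f T \<omega> (int j)) \<longrightarrow> acomp v 1 * acomp v N \<noteq> 0)
       \<and> (z = V22 f T \<omega> 1 \<longrightarrow> acomp v N \<noteq> 0)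
       \<and> (z = V22 f T \<omega> (int N) \<longrightarrow> acomp v 1 \<noteq> 0)
       \<and> ((\<forall>j \<in> {2..N-1}. z \<noteq> V22 f T \<omega> (int j)) \<longrightarrow> eig_mult (Smat f T \<omega> N) z = 1)
       \<and> (\<forall>m \<in> {2..N-1}. z = V22 f T \<omega> (int m) \<longrightarrow>
            eig_mult (Smat f T \<omega> N) z \<le> 2 \<and>
            (eig_mult (Smat f T \<omega> N) z = 2 \<longrightarrow>
               (\<exists>w. eigenvector (Smat f T \<omega> N) w z \<and> acomp w N \<noteq> 0) \<and>
               (\<exists>w. eigenvector (Smat f T \<omega> N) w z \<and> acomp w N = 0)))"
proof -
  define S where "S = Smat f T \<omega> N"
  have Sc: "S \<in> carrier_mat (2*N) (2*N)" unfolding S_def by (rule Smat_carrier)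
  define C where "C = char_matrix S z"
  have Cc: "C \<in> carrier_mat (2*N) (2*N)" unfolding C_def using Sc by simp
  interpret K: kernel "2*N" "2*N" C by (unfold_locales) (rule Cc)
  have em: "eig_mult S z = K.dim" unfolding eig_mult_def C_def[symmetric] by simp
  have kerI: "w \<in> mat_kernel C \<longleftrightarrow> w \<in> carrier_vec (2*N) \<and> S *\<^sub>v w = z \<cdot>\<^sub>v w" for w
    unfolding C_def by (rule kernel_iff[OF Sc])
  let ?\<alpha> = "\<lambda>j. Vpot f T \<omega> (int j) $$ (0,0)"
  let ?\<beta> = "\<lambda>j. Vpot f T \<omega> (int j) $$ (0,1)"
  let ?\<delta> = "\<lambda>j. Vpot f T \<omega> (int j) $$ (1,0)"
  let ?\<gamma> = "\<lambda>j. Vpot f T \<omega> (int j) $$ (1,1)"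
  have rec: "recur (acf N w) (bcf w) ?\<alpha> ?\<beta> ?\<delta> ?\<gamma> N z" if "w \<in> mat_kernel C" for w
    using eig_recur[OF f_mat f_sa om, of w N z] that unfolding kerI S_def by blast
  have gam: "?\<gamma> j = V22 f T \<omega> (int j)" for j unfolding V22_def by simp
  have dist: "?\<gamma> i \<noteq> ?\<gamma> j" if "i \<noteq> j" for i j
    using om that unfolding Omega0_def gam by auto
  have zero: "w = 0\<^sub>v (2*N)" if w: "w \<in> mat_kernel C"
    and all: "\<And>j. 1 \<le> j \<Longrightarrow> j \<le> N \<Longrightarrow> acf N w j = 0 \<and> bcf w j = 0" for w
  proof (rule eq_vecI)
    have wc: "w \<in> carrier_vec (2*N)" using w kerI by blast
    thus "dim_vec w = dim_vec (0\<^sub>v (2*N))" by simp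
    fix p assume "p < dim_vec (0\<^sub>v (2*N))"
    hence p: "p < 2*N" by simp
    define j where "j = p div 2 + 1"
    have j: "1 \<le> j" "j \<le> N" using p unfolding j_def by auto
    have "p = 2*(j-1) \<or> p = 2*(j-1)+1" unfolding j_def by auto
    thus "w $ p = 0\<^sub>v (2*N) $ p" using all[OF j] j p unfolding acf_def bcf_def by auto
  qed
  have vK: "v \<in> mat_kernel C" and vnz: "v \<noteq> 0\<^sub>v (2*N)"
    using ev Sc unfolding kerI S_def[symmetric] eigenvector_def by auto
  have acompK: "acomp w j = acf N w j" if "1 \<le> j" "j \<le> N" for w :: "complex vec" and j
    using that unfolding acomp_def acf_def by simp
  have evK: "eigenvector S w z" if "w \<in> mat_kernel C" "w \<noteq> 0\<^sub>v (2*N)" for w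
    using that Sc unfolding kerI eigenvector_def by auto
  have N1: "N \<ge> 1" using N by simp
  have UF: "w = 0\<^sub>v (2*N)" if w: "w \<in> mat_kernel C" and ne: "\<And>j. 1 \<le> j \<Longrightarrow> j \<le> N - 1 \<Longrightarrow> z \<noteq> ?\<gamma> j"
    and a1: "acf N w 1 = 0" for w
    using zero[OF w recur.uniq_F[OF rec[OF w] N1 ne a1]] by blast
  have UB: "w = 0\<^sub>v (2*N)" if w: "w \<in> mat_kernel C" and ne: "\<And>j. 2 \<le> j \<Longrightarrow> j \<le> N \<Longrightarrow> z \<noteq> ?\<gamma> j"
    and aN: "acf N w N = 0" for w
    using zero[OF w recur.uniq_B[OF rec[OF w] N1 ne aN]] by blast
  have c0: "w $ 0 = acf N w 1" for w :: "complex vec" using N unfolding acf_def by simp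
  have cN: "w $ (2*(N-1)) = acf N w N" for w :: "complex vec" using N unfolding acf_def by simp
  have P1: "acomp v 1 * acomp v N \<noteq> 0" if H: "\<forall>j \<in> {1..N}. z \<noteq> V22 f T \<omega> (int j)"
  proof -
    have "acf N v 1 \<noteq> 0" using UF[OF vK] H vnz unfolding gam by auto
    moreover have "acf N v N \<noteq> 0" using UB[OF vK] H vnz unfolding gam by auto
    ultimately show ?thesis using acompK N by simp
  qed
  have P2: "acomp v N \<noteq> 0" if H: "z = V22 f T \<omega> 1"
  proof -
    have "z \<noteq> ?\<gamma> j" if "2 \<le> j" for j using H dist[of 1 j] that unfolding gam by auto
    hence "acf N v N \<noteq> 0" using UB[OF vK] vnz by auto
    thus ?thesis using acompK N by simp
  qed
  have P3: "acomp v 1 \<noteq> 0" if H: "z = V22 f T \<omega> (int N)"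
  proof -
    have "z \<noteq> ?\<gamma> j" if "j \<le> N - 1" for j using H dist[of N j] that N unfolding gam by auto
    hence "acf N v 1 \<noteq> 0" using UF[OF vK] vnz by auto
    thus ?thesis using acompK N by simp
  qed
  have dpos: "K.dim \<ge> 1" by (rule K.dim_pos[OF vK vnz])
  have P4: "eig_mult S z = 1" if H: "\<forall>j \<in> {2..N-1}. z \<noteq> V22 f T \<omega> (int j)"
  proof -
    define c where "c = (if z = ?\<gamma> 1 then 2*(N-1) else 0)"
    have c: "c < 2*N" unfolding c_def using N by auto
    have u: "w = 0\<^sub>v (2*N)" if w: "w \<in> mat_kernel C" "w $ c = 0" for w :: "complex vec"
    proof (cases "z = ?\<gamma> 1")
      case True
      have "z \<noteq> ?\<gamma> j" if "2 \<le> j" for j using True dist[of 1 j] that by auto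
      moreover have "acf N w N = 0" using w True cN unfolding c_def by simp
      ultimately show ?thesis using UB[OF w(1)] by blast
    next
      case False
      have "z \<noteq> ?\<gamma> j" if "1 \<le> j" "j \<le> N - 1" for j
        using False H that unfolding gam by (cases "j = 1") auto
      moreover have "acf N w 1 = 0" using w False c0 unfolding c_def by simp
      ultimately show ?thesis using UF[OF w(1)] by blast
    qed
    have "K.dim \<le> 1" using K.dim_le2[OF c c] u by blast
    thus ?thesis using dpos em by simp
  qed
  have P5: "eig_mult S z \<le> 2 \<and> (eig_mult S z = 2 \<longrightarrow>
               (\<exists>w. eigenvector S w z \<and> acomp w N \<noteq> 0) \<and>
               (\<exists>w. eigenvector S w z \<and> acomp w N = 0))"
    if m: "m \<in> {2..N-1}" "z = V22 f T \<omega> (int m)" for m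
  proof -
    have ne: "z \<noteq> ?\<gamma> j" if "j \<noteq> m" for j using m(2) dist[of m j] that unfolding gam by auto
    have u: "w = 0\<^sub>v (2*N)" if w: "w \<in> mat_kernel C" "w $ 0 = 0" "w $ (2*(N-1)) = 0" for w :: "complex vec"
      using zero[OF w(1) recur.uniq_M[OF rec[OF w(1)] _ _ ne]] m w c0 cN by auto
    have i0: "0 < 2*N" "2*(N-1) < 2*N" using N by auto
    from K.dim_le2[OF i0 u]
    have D: "K.dim \<le> 2 \<and> (K.dim = 2 \<longrightarrow> (\<exists>w\<in>mat_kernel C. w $ (2*(N-1)) \<noteq> 0) \<and>
        (\<exists>w\<in>mat_kernel C. w \<noteq> 0\<^sub>v (2*N) \<and> w $ (2*(N-1)) = 0))" by blast
    show ?thesis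
    proof (intro conjI impI)
      show "eig_mult S z \<le> 2" using D em by simp
      assume "eig_mult S z = 2"
      hence d2: "K.dim = 2" using em by simp
      then obtain w where w: "w \<in> mat_kernel C" "w $ (2*(N-1)) \<noteq> 0" using D by blast
      have "w \<noteq> 0\<^sub>v (2*N)" using w(2) i0 by auto
      thus "\<exists>w. eigenvector S w z \<and> acomp w N \<noteq> 0"
        using evK[OF w(1)] w(2) unfolding acomp_def by blast
      obtain w' where w': "w' \<in> mat_kernel C" "w' \<noteq> 0\<^sub>v (2*N)" "w' $ (2*(N-1)) = 0" using D d2 by blast
      thus "\<exists>w. eigenvector S w z \<and> acomp w N = 0"
        using evK[OF w'(1,2)] unfolding acomp_def by blast
    qed
  qed
  show ?thesis using P1 P2 P3 P4 P5 unfolding S_def by blast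
qed

end
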